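(* There is no automorphism $\varphi$ of $E$ of type 4 such that its linearization $\varphi_\ell$ is the identity map on $E$.
   Context: $F$ is a field of characteristic zero, $L$ an infinite-dimensional $F$-vector space with basis $e_1,e_2,\ldots$, $E$ the Grassmann algebra of $L$. An automorphism $\varphi$ of $E$ with $\varphi^2=\mathrm{id}$ is of type 4 if for every basis $\gamma$ of $L$ no element $v\in\gamma$ satisfies $\varphi(v)=\pm v$. Linearization: write $\varphi(e_i)=u_i+v_i$ with $u_i\in L$ and $v_i$ a linear combination of monomials of length $\ge2$; $\varphi_\ell$ is the endomorphism of $E$ with $\varphi_\ell(e_i)=u_i$ for all $i$. *)

theory Defs
  imports Main
begin

text \<open>An element of E is represented by its coefficient function on monomials:
  a monomial e_{i_1} ... e_{i_k} with i_1 < ... < i_k is identified with the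
  finite set {i_1,...,i_k} of natural numbers (the empty set is the unit 1).\<close>

type_synonym 'a grass = "nat set \<Rightarrow> 'a"

definition grass_carrier :: "('a::field_char_0) grass set" where
  "grass_carrier = {x. finite {S. x S \<noteq> 0} \<and> (\<forall>S. x S \<noteq> 0 \<longrightarrow> finite S)}"

definition gadd :: "('a::field_char_0) grass \<Rightarrow> 'a grass \<Rightarrow> 'a grass" where
  "gadd x y = (\<lambda>S. x S + y S)"

definition gsmult :: "'a::field_char_0 \<Rightarrow> 'a grass \<Rightarrow> 'a grass" where
  "gsmult c x = (\<lambda>S. c * x S)"

definition gneg :: "('a::field_char_0) grass \<Rightarrow> 'a grass" where
  "gneg x = (\<lambda>S. - x S)"

text \<open>Sign of e_T e_U (T, U disjoint) when rewritten as the ordered monomial e_{T \<union> U}.\<close>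
definition gsign :: "nat set \<Rightarrow> nat set \<Rightarrow> 'a::field_char_0" where
  "gsign T U = (-1) ^ card {(t, u). t \<in> T \<and> u \<in> U \<and> u < t}"

definition gmult :: "('a::field_char_0) grass \<Rightarrow> 'a grass \<Rightarrow> 'a grass" where
  "gmult x y = (\<lambda>S. if finite S then (\<Sum>T\<in>Pow S. gsign T (S - T) * x T * y (S - T)) else 0)"

definition gunit :: "('a::field_char_0) grass" where
  "gunit = (\<lambda>S. if S = {} then 1 else 0)"

definition gen :: "nat \<Rightarrow> ('a::field_char_0) grass" where
  "gen i = (\<lambda>S. if S = {i} then 1 else 0)"

definition Lspace :: "('a::field_char_0) grass set" where
  "Lspace = {x \<in> grass_carrier. \<forall>S. x S \<noteq> 0 \<longrightarrow> card S = 1}"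

definition is_basis_L :: "('a::field_char_0) grass set \<Rightarrow> bool" where
  "is_basis_L \<gamma> \<longleftrightarrow> \<gamma> \<subseteq> Lspace
     \<and> (\<forall>A c. finite A \<and> A \<subseteq> \<gamma> \<and> (\<forall>S. (\<Sum>v\<in>A. c v * v S) = 0) \<longrightarrow> (\<forall>v\<in>A. c v = 0))
     \<and> (\<forall>x\<in>Lspace. \<exists>A c. finite A \<and> A \<subseteq> \<gamma> \<and> x = (\<lambda>S. \<Sum>v\<in>A. c v * v S))"

definition is_endo :: "(('a::field_char_0) grass \<Rightarrow> 'a grass) \<Rightarrow> bool" where
  "is_endo f \<longleftrightarrow> f ` grass_carrier \<subseteq> grass_carrier
     \<and> (\<forall>x\<in>grass_carrier. \<forall>y\<in>grass_carrier. f (gadd x y) = gadd (f x) (f y))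
     \<and> (\<forall>c. \<forall>x\<in>grass_carrier. f (gsmult c x) = gsmult c (f x))
     \<and> (\<forall>x\<in>grass_carrier. \<forall>y\<in>grass_carrier. f (gmult x y) = gmult (f x) (f y))
     \<and> f gunit = gunit"

definition is_auto :: "(('a::field_char_0) grass \<Rightarrow> 'a grass) \<Rightarrow> bool" where
  "is_auto f \<longleftrightarrow> is_endo f \<and> bij_betw f grass_carrier grass_carrier"

definition is_involution :: "(('a::field_char_0) grass \<Rightarrow> 'a grass) \<Rightarrow> bool" where
  "is_involution f \<longleftrightarrow> (\<forall>x\<in>grass_carrier. f (f x) = x)"

definition type4 :: "(('a::field_char_0) grass \<Rightarrow> 'a grass) \<Rightarrow> bool" where
  "type4 f \<longleftrightarrow> (\<forall>\<gamma>. is_basis_L \<gamma> \<longrightarrow> (\<forall>v\<in>\<gamma>. f v \<noteq> v \<and> f v \<noteq> gneg v))"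

definition is_linearization ::
  "(('a::field_char_0) grass \<Rightarrow> 'a grass) \<Rightarrow> ('a grass \<Rightarrow> 'a grass) \<Rightarrow> bool" where
  "is_linearization f g \<longleftrightarrow> is_endo g \<and>
     (\<forall>i. \<exists>u v. u \<in> Lspace \<and> v \<in> grass_carrier \<and> (\<forall>S. card S < 2 \<longrightarrow> v S = 0)
               \<and> f (gen i) = gadd u v \<and> g (gen i) = u)"

end

theory Submission
  imports Defs
begin

definition Fk :: "nat \<Rightarrow> ('a::field_char_0) grass \<Rightarrow> bool" where
  "Fk k x \<longleftrightarrow> (\<forall>S. card S < k \<longrightarrow> x S = 0)"

definition mon :: "nat set \<Rightarrow> ('a::field_char_0) grass" where
  "mon T = (\<lambda>S. if S = T then 1 else 0)"

lemma gadd_carrier: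
  assumes "x \<in> grass_carrier" "y \<in> grass_carrier"
  shows "gadd x y \<in> grass_carrier"
proof -
  have "{S. x S + y S \<noteq> 0} \<subseteq> {S. x S \<noteq> 0} \<union> {S. y S \<noteq> 0}" by auto
  moreover have "finite ({S. x S \<noteq> 0} \<union> {S. y S \<noteq> 0})" using assms by (simp add: grass_carrier_def)
  ultimately show ?thesis using assms unfolding grass_carrier_def gadd_def
    by (auto intro: finite_subset)
qed

lemma gsmult_carrier:
  assumes "x \<in> grass_carrier"
  shows "gsmult c x \<in> grass_carrier"
proof -
  have "{S. c * x S \<noteq> 0} \<subseteq> {S. x S \<noteq> 0}" by auto
  thus ?thesis using assms unfolding grass_carrier_def gsmult_def
    by (auto intro: finite_subset)
qed

lemma zero_carrier: "(\<lambda>S. 0) \<in> (grass_carrier :: ('a::field_char_0) grass set)"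
  by (simp add: grass_carrier_def)

lemma mon_carrier: "finite T \<Longrightarrow> (mon T :: ('a::field_char_0) grass) \<in> grass_carrier"
proof -
  assume "finite T"
  have "{S. (mon T :: 'a grass) S \<noteq> 0} \<subseteq> {T}" by (auto simp: mon_def)
  thus ?thesis using \<open>finite T\<close> unfolding grass_carrier_def by (auto intro: finite_subset simp: mon_def)
qed

lemma gen_carrier: "(gen i :: ('a::field_char_0) grass) \<in> grass_carrier"
proof -
  have "{S. (gen i :: 'a grass) S \<noteq> 0} \<subseteq> {{i}}" by (auto simp: gen_def)
  thus ?thesis unfolding grass_carrier_def by (auto intro: finite_subset simp: gen_def)
qed

lemma gunit_carrier: "(gunit :: ('a::field_char_0) grass) \<in> grass_carrier"
proof -
  have "{S. (gunit :: 'a grass) S \<noteq> 0} \<subseteq> {{}}" by (auto simp: gunit_def)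
  thus ?thesis unfolding grass_carrier_def by (auto intro: finite_subset simp: gunit_def)
qed

lemma sum_carrier:
  assumes "finite A" "\<forall>S\<in>A. y S \<in> grass_carrier"
  shows "(\<lambda>R. \<Sum>S\<in>A. (y S :: ('a::field_char_0) grass) R) \<in> grass_carrier"
  using assms
proof (induction A rule: finite_induct)
  case empty then show ?case by (simp add: zero_carrier)
next
  case (insert a A)
  have "(\<lambda>R. \<Sum>S\<in>insert a A. y S R) = gadd (y a) (\<lambda>R. \<Sum>S\<in>A. y S R)"
    using insert by (simp add: gadd_def)
  thus ?case using insert gadd_carrier by auto
qed

lemma Fk_gmult:
  assumes "Fk a x" "Fk b y"
  shows "Fk (a+b) (gmult x y)"
  unfolding Fk_def
proof (intro allI impI)
  fix S :: "nat set" assume c: "card S < a+b"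
  show "gmult x y S = 0"
  proof (cases "finite S")
    case False thus ?thesis by (simp add: gmult_def)
  next
    case True
    have "\<forall>T\<in>Pow S. gsign T (S-T) * x T * y (S-T) = 0"
    proof
      fix T assume "T\<in>Pow S"
      hence "T \<subseteq> S" by auto
      hence "card T + card (S-T) = card S" using True
        by (metis card_Diff_subset card_mono finite_subset le_add_diff_inverse)
      hence "card T < a \<or> card (S-T) < b" using c by linarith
      thus "gsign T (S-T) * x T * y (S-T) = 0" using assms by (auto simp: Fk_def)
    qed
    thus ?thesis using True unfolding gmult_def by (simp del: mult_eq_0_iff)
  qed
qed

lemma Fk_gadd: "Fk k x \<Longrightarrow> Fk k y \<Longrightarrow> Fk k (gadd x y)"
  by (simp add: Fk_def gadd_def)

lemma Fk_mono: "Fk k x \<Longrightarrow> j \<le> k \<Longrightarrow> Fk j x"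
  by (simp add: Fk_def)

lemma gmult_add_left: "gmult (gadd x y) z = gadd (gmult x z) (gmult y z)"
  by (rule ext) (simp add: gmult_def gadd_def sum.distrib algebra_simps)

lemma gmult_add_right: "gmult x (gadd y z) = gadd (gmult x y) (gmult x z)"
  by (rule ext) (simp add: gmult_def gadd_def sum.distrib algebra_simps)

lemma Fk_gen: "Fk 1 (gen i)"
  by (auto simp: Fk_def gen_def)

lemma Fk_mon: "Fk (card T) (mon T)"
  by (auto simp: Fk_def mon_def)

lemma gen_mon:
  assumes "finite T" "i \<notin> T" "\<forall>t\<in>T. i < t"
  shows "gmult (gen i) (mon T) = (mon (insert i T) :: ('a::field_char_0) grass)"
proof
  fix R :: "nat set"
  show "gmult (gen i) (mon T) R = (mon (insert i T) :: 'a grass) R"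
  proof (cases "finite R")
    case False then have "R \<noteq> insert i T" using assms by auto
    with False show ?thesis by (simp add: gmult_def mon_def)
  next
    case True
    have gs: "gsign {i} T = (1::'a)"
    proof -
      have "{(t, u). t \<in> {i} \<and> u \<in> T \<and> u < t} = {}" using assms(3) by auto
      thus ?thesis unfolding gsign_def by (simp only: card.empty power_0)
    qed
    have eq: "\<forall>T'\<in>Pow R. gsign T' (R-T') * (gen i :: 'a grass) T' * mon T (R-T')
       = (if T' = {i} \<and> R = insert i T then (1::'a) else 0)"
    proof
      fix T' assume T': "T' \<in> Pow R"
      show "gsign T' (R-T') * (gen i :: 'a grass) T' * mon T (R-T')
       = (if T' = {i} \<and> R = insert i T then (1::'a) else 0)"
      proof (cases "T' = {i} \<and> R - {i} = T")
        case True
        then have "R = insert i T" using T' by auto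
        then show ?thesis using True gs by (simp add: gen_def mon_def)
      next
        case False
        have "\<not> (T' = {i} \<and> R = insert i T)" using False assms(2) by auto
        then show ?thesis using False by (auto simp: gen_def mon_def)
      qed
    qed
    have "gmult (gen i) (mon T) R = (\<Sum>T'\<in>Pow R. (if T' = {i} \<and> R = insert i T then (1::'a) else 0))"
      using True eq by (simp add: gmult_def)
    also have "\<dots> = mon (insert i T) R"
      using True by (cases "R = insert i T") (auto simp: mon_def)
    finally show ?thesis .
  qed
qed


lemma endo_mult: "is_endo f \<Longrightarrow> x \<in> grass_carrier \<Longrightarrow> y \<in> grass_carrier \<Longrightarrow> f (gmult x y) = gmult (f x) (f y)"
  by (simp add: is_endo_def)

lemma endo_add: "is_endo f \<Longrightarrow> x \<in> grass_carrier \<Longrightarrow> y \<in> grass_carrier \<Longrightarrow> f (gadd x y) = gadd (f x) (f y)"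
  by (simp add: is_endo_def)

lemma endo_smult: "is_endo f \<Longrightarrow> x \<in> grass_carrier \<Longrightarrow> f (gsmult c x) = gsmult c (f x)"
  by (simp add: is_endo_def)

lemma endo_carrier: "is_endo f \<Longrightarrow> x \<in> grass_carrier \<Longrightarrow> f x \<in> grass_carrier"
  by (auto simp add: is_endo_def)

lemma phi_mon:
  fixes \<phi> :: "('a::field_char_0) grass \<Rightarrow> 'a grass"
  assumes E: "is_endo \<phi>" and V: "\<forall>i. \<exists>v. Fk 2 v \<and> \<phi> (gen i) = gadd (gen i) v"
  and "finite S"
  shows "\<exists>r. Fk (card S + 1) r \<and> \<phi> (mon S) = gadd (mon S) r"
  using \<open>finite S\<close>
proof (induction S rule: finite_remove_induct)
  case empty
  have mg: "mon {} = gunit" by (auto simp: mon_def gunit_def)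
  have "\<phi> (mon {}) = mon {}" using E unfolding is_endo_def mg by blast
  hence "\<phi> (mon {}) = gadd (mon {}) (\<lambda>S. 0)" by (simp add: gadd_def)
  moreover have "Fk (card {} + 1) (\<lambda>S. 0::'a)" by (simp add: Fk_def)
  ultimately show ?case by blast
next
  case (remove A)
  define i where "i = Min A"
  define T where "T = A - {i}"
  have iA: "i \<in> A" using remove Min_in i_def by auto
  have fT: "finite T" using remove T_def by auto
  have iT: "i \<notin> T" using T_def by auto
  have lt: "\<forall>t\<in>T. i < t" using remove T_def i_def
    by (metis DiffD1 DiffD2 Min_le insertCI nat_less_le)
  have AT: "A = insert i T" using iA T_def by auto
  have cT: "card A = card T + 1" using AT fT iT by simp
  from remove.IH[OF iA] obtain r where r: "Fk (card T + 1) r" "\<phi> (mon T) = gadd (mon T) r"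
    using T_def by auto
  from V obtain v where v: "Fk 2 v" "\<phi> (gen i) = gadd (gen i) v" by blast
  have "\<phi> (mon A) = \<phi> (gmult (gen i) (mon T))" using gen_mon[OF fT iT lt, where 'a='a] AT by simp
  also have "\<dots> = gmult (\<phi> (gen i)) (\<phi> (mon T))"
    by (rule endo_mult[OF E gen_carrier mon_carrier[OF fT]])
  also have "\<dots> = gadd (mon A) (gadd (gmult (gen i) r) (gadd (gmult v (mon T)) (gmult v r)))"
    unfolding v(2) r(2) gmult_add_left gmult_add_right gen_mon[OF fT iT lt] AT[symmetric]
    by (rule ext) (simp add: gadd_def algebra_simps)
  finally have eq: "\<phi> (mon A) = gadd (mon A) (gadd (gmult (gen i) r) (gadd (gmult v (mon T)) (gmult v r)))" .
  have f1: "Fk (card A + 1) (gmult (gen i) r)"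
    using Fk_gmult[OF Fk_gen r(1)] cT by simp
  have f2: "Fk (card A + 1) (gmult v (mon T))"
    using Fk_gmult[OF v(1) Fk_mon] cT by simp
  have f3: "Fk (card A + 1) (gmult v r)"
    using Fk_mono[OF Fk_gmult[OF v(1) r(1)]] cT by simp
  show ?case using eq f1 f2 f3 Fk_gadd by blast
qed


lemma phi_sum:
  fixes \<phi> :: "('a::field_char_0) grass \<Rightarrow> 'a grass"
  assumes E: "is_endo \<phi>"
  shows "finite A \<Longrightarrow> \<forall>S\<in>A. y S \<in> grass_carrier \<Longrightarrow>
    \<phi> (\<lambda>R. \<Sum>S\<in>A. y S R) = (\<lambda>R. \<Sum>S\<in>A. \<phi> (y S) R)"
proof (induction A rule: finite_induct)
  case empty
  have z: "(\<lambda>R. 0::'a) = gsmult 0 gunit" by (simp add: gsmult_def)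
  have "\<phi> (gsmult 0 gunit) = gsmult 0 (\<phi> gunit)" by (rule endo_smult[OF E gunit_carrier])
  then have "\<phi> (\<lambda>R. 0) = (\<lambda>R. 0)" unfolding z[symmetric] by (simp add: gsmult_def)
  then show ?case by simp
next
  case (insert a A)
  have e1: "(\<lambda>R. \<Sum>S\<in>insert a A. y S R) = gadd (y a) (\<lambda>R. \<Sum>S\<in>A. y S R)"
    using insert by (simp add: gadd_def)
  have c: "(\<lambda>R. \<Sum>S\<in>A. y S R) \<in> grass_carrier" using insert sum_carrier by auto
  have "\<phi> (gadd (y a) (\<lambda>R. \<Sum>S\<in>A. y S R)) = gadd (\<phi> (y a)) (\<phi> (\<lambda>R. \<Sum>S\<in>A. y S R))"
    using endo_add[OF E _ c] insert by auto
  also have "\<dots> = (\<lambda>R. \<Sum>S\<in>insert a A. \<phi> (y S) R)"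
    using insert by (simp add: gadd_def)
  finally show ?case using e1 by simp
qed

lemma decomp:
  assumes "x \<in> grass_carrier"
  shows "x = (\<lambda>R. \<Sum>S\<in>{S. x S \<noteq> 0}. gsmult (x S) (mon S) R)"
proof
  fix R
  have "(\<Sum>S\<in>{S. x S \<noteq> 0}. gsmult (x S) (mon S) R) = (\<Sum>S\<in>{S. x S \<noteq> 0}. if S = R then x S else 0)"
    by (rule sum.cong) (auto simp: gsmult_def mon_def)
  also have "\<dots> = x R" using assms by (simp add: grass_carrier_def sum.delta')
  finally show "x R = (\<Sum>S\<in>{S. x S \<noteq> 0}. gsmult (x S) (mon S) R)" by simp
qed

lemma phi_filt:
  fixes \<phi> :: "('a::field_char_0) grass \<Rightarrow> 'a grass"
  assumes E: "is_endo \<phi>" and V: "\<forall>i. \<exists>v. Fk 2 v \<and> \<phi> (gen i) = gadd (gen i) v"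
  and xc: "x \<in> grass_carrier" and xk: "Fk k x"
  shows "Fk (k+1) (\<lambda>R. \<phi> x R - x R)"
proof -
  have "\<forall>S. \<exists>r. finite S \<longrightarrow> Fk (card S + 1) r \<and> \<phi> (mon S) = gadd (mon S) r"
    using phi_mon[OF E V] by blast
  from choice[OF this] obtain r where r0: "\<forall>S. finite S \<longrightarrow> Fk (card S + 1) (r S) \<and> \<phi> (mon S) = gadd (mon S) (r S)"
    by blast
  then have r: "\<And>S. finite S \<Longrightarrow> Fk (card S + 1) (r S) \<and> \<phi> (mon S) = gadd (mon S) (r S)"
    by blast
  define A where "A = {S. x S \<noteq> 0}"
  have fA: "finite A" and fS: "\<forall>S\<in>A. finite S" using xc by (auto simp: A_def grass_carrier_def)
  have cA: "\<forall>S\<in>A. gsmult (x S) (mon S) \<in> grass_carrier" using fS mon_carrier gsmult_carrier by blast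
  have "\<phi> x = \<phi> (\<lambda>R. \<Sum>S\<in>A. gsmult (x S) (mon S) R)" using decomp[OF xc] unfolding A_def by (rule arg_cong)
  also have "\<dots> = (\<lambda>R. \<Sum>S\<in>A. \<phi> (gsmult (x S) (mon S)) R)" by (rule phi_sum[OF E fA cA])
  also have "\<dots> = (\<lambda>R. \<Sum>S\<in>A. x S * (mon S R + r S R))"
  proof (rule ext, rule sum.cong)
    fix R S assume "S \<in> A"
    then have "finite S" using fS by auto
    have "\<phi> (gsmult (x S) (mon S)) = gsmult (x S) (\<phi> (mon S))"
      by (rule endo_smult[OF E mon_carrier[OF \<open>finite S\<close>]])
    then show "\<phi> (gsmult (x S) (mon S)) R = x S * (mon S R + r S R)"
      using r[OF \<open>finite S\<close>] by (simp add: gsmult_def gadd_def)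
  qed simp
  finally have px: "\<phi> x = (\<lambda>R. \<Sum>S\<in>A. x S * (mon S R + r S R))" .
  have xx: "x R = (\<Sum>S\<in>A. x S * mon S R)" for R
  proof -
    have "x R = (\<Sum>S\<in>A. gsmult (x S) (mon S) R)" using decomp[OF xc] unfolding A_def by (rule fun_cong)
    then show ?thesis by (simp add: gsmult_def)
  qed
  show ?thesis unfolding Fk_def
  proof (intro allI impI)
    fix R :: "nat set" assume cR: "card R < k + 1"
    have "\<phi> x R - x R = (\<Sum>S\<in>A. x S * r S R)"
      by (subst xx[of R], subst px) (simp add: distrib_left sum.distrib)
    also have "\<dots> = 0"
    proof (rule sum.neutral, rule ballI)
      fix S assume SA: "S \<in> A"
      then have "x S \<noteq> 0" by (simp add: A_def)
      then have "\<not> card S < k" using xk by (auto simp: Fk_def)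
      then have "r S R = 0" using r[of S] fS SA cR by (auto simp: Fk_def)
      then show "x S * r S R = 0" by simp
    qed
    finally show "\<phi> x R - x R = 0" .
  qed
qed


lemma gen_eq: "((gen i :: ('a::field_char_0) grass) = gen j) \<longleftrightarrow> i = j"
proof
  assume "(gen i :: 'a grass) = gen j"
  then have "(gen j :: 'a grass) {i} = 1" unfolding gen_def by metis
  then show "i = j" by (auto simp: gen_def split: if_splits)
qed simp

lemma gen_val: "(gen k :: ('a::field_char_0) grass) {j} = (if (gen k :: 'a grass) = gen j then 1 else 0)"
proof (cases "k = j")
  case True thus ?thesis by (simp add: gen_def)
next
  case False
  then have ne: "(gen k :: 'a grass) \<noteq> gen j" using gen_eq[of k j] by blast
  have "(gen k :: 'a grass) {j} = 0" using False by (simp add: gen_def)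
  then show ?thesis using ne by simp
qed

lemma basis_gen: "is_basis_L (range (gen :: nat \<Rightarrow> ('a::field_char_0) grass))"
  unfolding is_basis_L_def
proof (intro conjI allI impI ballI)
  show "range (gen :: nat \<Rightarrow> 'a grass) \<subseteq> Lspace"
    using gen_carrier by (auto simp: Lspace_def gen_def split: if_splits)
next
  fix A :: "'a grass set" and c v
  assume H: "finite A \<and> A \<subseteq> range gen \<and> (\<forall>S. (\<Sum>v\<in>A. c v * v S) = 0)" and vA: "v \<in> A"
  then obtain j where vj: "v = gen j" by auto
  have "(\<Sum>w\<in>A. c w * w {j}) = (\<Sum>w\<in>A. if w = v then c w else 0)"
  proof (rule sum.cong)
    fix w assume "w \<in> A"
    then obtain k where "w = gen k" using H by auto
    then have "w {j} = (if w = v then 1 else 0)" using vj gen_val[of k j] by simp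
    then show "c w * w {j} = (if w = v then c w else 0)" by simp
  qed simp
  also have "\<dots> = c v" using H vA by (simp add: sum.delta')
  finally show "c v = 0" using H by simp
next
  fix x :: "'a grass" assume xL: "x \<in> Lspace"
  define I where "I = (\<lambda>i. {i}) -` {S. x S \<noteq> 0}"
  have fI: "finite I" unfolding I_def
    by (rule finite_vimageI) (use xL in \<open>auto simp: Lspace_def grass_carrier_def inj_def\<close>)
  define c where "c = (\<lambda>w::'a grass. x {SOME i. w = gen i})"
  have cg: "c (gen i) = x {i}" for i
  proof -
    have "(SOME j. (gen i :: 'a grass) = gen j) = i" by (simp add: gen_eq)
    then show ?thesis by (simp add: c_def)
  qed
  have "x = (\<lambda>S. \<Sum>w\<in>gen ` I. c w * w S)"
  proof
    fix S
    have "(\<Sum>w\<in>gen ` I. c w * w S) = (\<Sum>i\<in>I. c (gen i) * (gen i :: 'a grass) S)"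
      by (rule sum.reindex_cong[where l=gen]) (auto simp: inj_on_def gen_eq)
    also have "\<dots> = (\<Sum>i\<in>I. x {i} * (gen i :: 'a grass) S)" by (simp add: cg)
    also have "\<dots> = (\<Sum>i\<in>I. if S = {i} then x {i} else 0)"
      by (rule sum.cong) (auto simp: gen_def)
    also have "\<dots> = x S"
    proof (cases "\<exists>j. S = {j}")
      case True
      then obtain j where Sj: "S = {j}" by auto
      have "(\<Sum>i\<in>I. if S = {i} then x {i} else 0) = (\<Sum>i\<in>I. if i = j then x {i} else 0)"
        using Sj by (intro sum.cong) auto
      also have "\<dots> = x S" using Sj fI by (auto simp: sum.delta' I_def)
      finally show ?thesis .
    next
      case False
      then have "card S \<noteq> 1" by (auto simp: card_1_singleton_iff)
      then have "x S = 0" using xL by (auto simp: Lspace_def)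
      then show ?thesis using False by auto
    qed
    finally show "x S = (\<Sum>w\<in>gen ` I. c w * w S)" by simp
  qed
  then show "\<exists>A c. finite A \<and> A \<subseteq> range gen \<and> x = (\<lambda>S. \<Sum>v\<in>A. c v * v S)"
    using fI by blast
qed

theorem theorem5p1:
  shows "\<not> (\<exists>\<phi> :: ('a::field_char_0) grass \<Rightarrow> 'a grass. is_auto \<phi> \<and> is_involution \<phi> \<and> type4 \<phi>
            \<and> (\<exists>\<psi>. is_linearization \<phi> \<psi> \<and> (\<forall>x\<in>grass_carrier. \<psi> x = x)))"
proof
  assume "\<exists>\<phi> :: 'a grass \<Rightarrow> 'a grass. is_auto \<phi> \<and> is_involution \<phi> \<and> type4 \<phi>
            \<and> (\<exists>\<psi>. is_linearization \<phi> \<psi> \<and> (\<forall>x\<in>grass_carrier. \<psi> x = x))"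
  then obtain \<phi> \<psi> :: "'a grass \<Rightarrow> 'a grass" where A: "is_auto \<phi>" "is_involution \<phi>" "type4 \<phi>"
    "is_linearization \<phi> \<psi>" "\<forall>x\<in>grass_carrier. \<psi> x = x" by blast
  have E: "is_endo \<phi>" using A(1) by (simp add: is_auto_def)
  have V': "\<exists>v. Fk 2 v \<and> v \<in> grass_carrier \<and> \<phi> (gen i) = gadd (gen i) v" for i
  proof -
    obtain u v where uv: "u \<in> Lspace" "v \<in> grass_carrier" "\<forall>S. card S < 2 \<longrightarrow> v S = 0"
      "\<phi> (gen i) = gadd u v" "\<psi> (gen i) = u"
      using A(4) unfolding is_linearization_def by blast
    have "u = gen i" using uv(5) A(5) gen_carrier by metis
    then show ?thesis using uv by (auto simp: Fk_def)
  qed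
  then have V: "\<forall>i. \<exists>v. Fk 2 v \<and> \<phi> (gen i) = gadd (gen i) v" by blast
  obtain v where v: "Fk 2 v" "v \<in> grass_carrier" "\<phi> (gen 0) = gadd (gen 0) v" using V' by blast
  have "gen 0 = \<phi> (\<phi> (gen 0))" using A(2) gen_carrier by (metis is_involution_def)
  also have "\<dots> = \<phi> (gadd (gen 0) v)" using v(3) by simp
  also have "\<dots> = gadd (\<phi> (gen 0)) (\<phi> v)" by (rule endo_add[OF E gen_carrier v(2)])
  also have "\<dots> = gadd (gadd (gen 0) v) (\<phi> v)" using v(3) by simp
  finally have "gen 0 = gadd (gadd (gen 0) v) (\<phi> v)" .
  then have "\<forall>S. (gen 0 :: 'a grass) S = gen 0 S + v S + \<phi> v S" by (metis gadd_def)
  then have pv: "\<phi> v S = - v S" for S by (metis add_cancel_right_right add.assoc neg_eq_iff_add_eq_0)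
  have "Fk k v" for k
  proof (induction k)
    case 0 then show ?case by (simp add: Fk_def)
  next
    case (Suc k)
    have "Fk (k+1) (\<lambda>R. \<phi> v R - v R)" by (rule phi_filt[OF E V v(2) Suc])
    then show ?case by (auto simp: Fk_def pv)
  qed
  then have "v S = 0" for S by (metis Fk_def lessI)
  then have "\<phi> (gen 0) = gen 0" using v(3) by (simp add: gadd_def)
  moreover have "\<phi> (gen 0) \<noteq> gen 0" using A(3) basis_gen unfolding type4_def by blast
  ultimately show False by simp
qed

end
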